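(* Let $f:\mathbb{P}^N\to\mathbb{P}^N$ be a linear map (an automorphism of $\mathbb{P}^N$ given by an invertible $(N+1)\times(N+1)$ matrix) defined over $\bar{\mathbb{Q}}$, and assume that there is at least one point of $\mathbb{P}^N$ whose $f$-orbit is Zariski dense. Then the set $(\mathbb{P}^N)_f^{\mathrm{dense}}$ contains a non-empty Zariski open subset of $\mathbb{P}^N$.
   Context: For a point $P$, $\mathcal{O}_f(P)=\{f^n(P):n\ge 0\}$ is its forward $f$-orbit, and $(\mathbb{P}^N)_f^{\mathrm{dense}}$ denotes the set of points $P\in\mathbb{P}^N$ whose orbit $\mathcal{O}_f(P)$ is Zariski dense in $\mathbb{P}^N$. *)

theory Defs
  imports Complex_Main "HOL-Computational_Algebra.Polynomial"
begin

text \<open>Q-bar is modelled as the algebraic complex numbers.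
Points of P^N(Q-bar) are represented by nonzero homogeneous coordinate vectors
x :: nat => complex with algebraic coordinates x 0, ..., x N (and x i = 0 for i > N).\<close>

definition qbar_vec :: "nat \<Rightarrow> (nat \<Rightarrow> complex) \<Rightarrow> bool" where
  "qbar_vec N x \<longleftrightarrow> (\<forall>i\<le>N. algebraic (x i)) \<and> (\<forall>i>N. x i = 0)"

definition proj_pts :: "nat \<Rightarrow> (nat \<Rightarrow> complex) set" where
  "proj_pts N = {x. qbar_vec N x \<and> (\<exists>i\<le>N. x i \<noteq> 0)}"

inductive qbar_poly :: "nat \<Rightarrow> ((nat \<Rightarrow> complex) \<Rightarrow> complex) \<Rightarrow> bool" for N where
  const: "algebraic c \<Longrightarrow> qbar_poly N (\<lambda>x. c)"
| var: "i \<le> N \<Longrightarrow> qbar_poly N (\<lambda>x. x i)"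
| add: "qbar_poly N p \<Longrightarrow> qbar_poly N q \<Longrightarrow> qbar_poly N (\<lambda>x. p x + q x)"
| mult: "qbar_poly N p \<Longrightarrow> qbar_poly N q \<Longrightarrow> qbar_poly N (\<lambda>x. p x * q x)"

text \<open>Homogeneous polynomials of degree d (over an infinite field, a polynomial function
satisfying p(c x) = c^d p(x) for all scalars c is exactly a homogeneous polynomial of degree d).\<close>
definition homog_poly :: "nat \<Rightarrow> ((nat \<Rightarrow> complex) \<Rightarrow> complex) \<Rightarrow> bool" where
  "homog_poly N p \<longleftrightarrow> qbar_poly N p \<and>
     (\<exists>d::nat. \<forall>c x. p (\<lambda>i. c * x i) = c ^ d * p x)"

definition zariski_zero :: "nat \<Rightarrow> ((nat \<Rightarrow> complex) \<Rightarrow> complex) set \<Rightarrow> (nat \<Rightarrow> complex) set" where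
  "zariski_zero N F = {x \<in> proj_pts N. \<forall>p\<in>F. p x = 0}"

definition zariski_closed :: "nat \<Rightarrow> (nat \<Rightarrow> complex) set \<Rightarrow> bool" where
  "zariski_closed N Z \<longleftrightarrow> (\<exists>F. (\<forall>p\<in>F. homog_poly N p) \<and> Z = zariski_zero N F)"

definition zariski_open :: "nat \<Rightarrow> (nat \<Rightarrow> complex) set \<Rightarrow> bool" where
  "zariski_open N U \<longleftrightarrow> U \<subseteq> proj_pts N \<and> zariski_closed N (proj_pts N - U)"

definition zariski_dense :: "nat \<Rightarrow> (nat \<Rightarrow> complex) set \<Rightarrow> bool" where
  "zariski_dense N S \<longleftrightarrow> (\<forall>Z. zariski_closed N Z \<and> S \<subseteq> Z \<longrightarrow> Z = proj_pts N)"

definition mat_apply :: "nat \<Rightarrow> (nat \<Rightarrow> nat \<Rightarrow> complex) \<Rightarrow> (nat \<Rightarrow> complex) \<Rightarrow> (nat \<Rightarrow> complex)" where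
  "mat_apply N A x = (\<lambda>i. if i \<le> N then (\<Sum>j\<le>N. A i j * x j) else 0)"

definition qbar_invertible :: "nat \<Rightarrow> (nat \<Rightarrow> nat \<Rightarrow> complex) \<Rightarrow> bool" where
  "qbar_invertible N A \<longleftrightarrow> (\<forall>i\<le>N. \<forall>j\<le>N. algebraic (A i j)) \<and>
     (\<exists>B. (\<forall>i\<le>N. \<forall>j\<le>N. algebraic (B i j)) \<and>
          (\<forall>i\<le>N. \<forall>k\<le>N. (\<Sum>j\<le>N. A i j * B j k) = (if i = k then 1 else 0)) \<and>
          (\<forall>i\<le>N. \<forall>k\<le>N. (\<Sum>j\<le>N. B i j * A j k) = (if i = k then 1 else 0)))"

definition orbit :: "('a \<Rightarrow> 'a) \<Rightarrow> 'a \<Rightarrow> 'a set" where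
  "orbit f P = {(f ^^ n) P | n. True}"

definition dense_orbit_pts :: "nat \<Rightarrow> ((nat \<Rightarrow> complex) \<Rightarrow> (nat \<Rightarrow> complex)) \<Rightarrow> (nat \<Rightarrow> complex) set" where
  "dense_orbit_pts N f = {P \<in> proj_pts N. zariski_dense N (orbit f P)}"

end

theory Submission
  imports Defs "HOL-Algebra.Finite_Extensions" "Jordan_Normal_Form.Determinant"
begin


definition CR :: "complex ring" where
  "CR = \<lparr> carrier = UNIV, monoid.mult = (\<lambda>x y. x * y), one = 1, ring.zero = 0, add = (\<lambda> x y. x + y) \<rparr>"

lemma CR_field: "field CR"
proof -
  have "\<exists>y. x + y = 0" for x :: complex
    using add.right_inverse by blast
  moreover have "x \<noteq> 0 \<Longrightarrow> \<exists>y. x * y = 1" for x :: complex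
    by (rule exI[of _ "inverse x"]) auto
  ultimately show ?thesis
    unfolding CR_def using add.right_inverse
    by unfold_locales (auto simp:algebra_simps Units_def)
qed

lemma CR_simps[simp]: "carrier CR = UNIV" "mult CR x y = x * y" "add CR x y = x + y"
  "one CR = 1" "zero CR = 0"
  by (simp_all add: CR_def)

lemma CR_pow[simp]: "x [^]\<^bsub>CR\<^esub> (n::nat) = x ^ n"
  by (induct n) (simp_all add: CR_def nat_pow_def)

lemma CR_eval: "ring.eval CR l x = poly (Poly (rev l)) x"
proof -
  interpret F: field CR by (rule CR_field)
  show ?thesis
  proof (induct l)
    case Nil then show ?case by simp
  next
    case (Cons a l)
    have "F.eval (a # l) x = a * x ^ length l + F.eval l x" by simp
    also have "\<dots> = poly (Poly (rev (a # l))) x"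
      using Cons by (simp add: Poly_snoc poly_monom)
    finally show ?case .
  qed
qed

lemma Rats_subfield: "subfield (\<rat>::complex set) CR"
proof -
  interpret F: field CR by (rule CR_field)
  show ?thesis
  proof (rule F.subfieldI'[OF F.subringI])
    show "\<rat> \<subseteq> carrier CR" by simp
    show "\<one>\<^bsub>CR\<^esub> \<in> \<rat>" by simp
    fix h1 h2 :: complex assume h: "h1 \<in> \<rat>" "h2 \<in> \<rat>"
    have "\<ominus>\<^bsub>CR\<^esub> h1 = - h1"
      by (rule F.minus_equality) auto
    then show "\<ominus>\<^bsub>CR\<^esub> h1 \<in> \<rat>" using h by simp
    show "h1 \<otimes>\<^bsub>CR\<^esub> h2 \<in> \<rat>" "h1 \<oplus>\<^bsub>CR\<^esub> h2 \<in> \<rat>" using h by simp_all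
  next
    fix k :: complex assume k: "k \<in> \<rat> - {\<zero>\<^bsub>CR\<^esub>}"
    have "inv\<^bsub>CR\<^esub> k = inverse k"
      by (rule F.comm_inv_char) (use k in auto)
    then show "inv\<^bsub>CR\<^esub> k \<in> \<rat>" using k by simp
  qed
qed

lemma alg_to_CR:
  assumes "algebraic (x::complex)"
  shows "(ring.algebraic CR over \<rat>) x"
proof -
  interpret F: field CR by (rule CR_field)
  obtain p where p: "\<forall>i. poly.coeff p i \<in> \<rat>" "p \<noteq> 0" "poly p x = 0"
    using assms algebraic_altdef by blast
  define l where "l = rev (coeffs p)"
  have "l \<in> carrier (\<rat>[X]\<^bsub>CR\<^esub>)"
  proof -
    have "set l \<subseteq> \<rat>" using p(1) unfolding l_def
      by (auto simp: coeffs_def)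
    moreover have "hd l \<noteq> 0" unfolding l_def using p(2)
      by (simp add: hd_rev last_coeffs_eq_coeff_degree)
    ultimately show ?thesis by (simp add: univ_poly_def polynomial_def)
  qed
  moreover have "l \<noteq> []" using p(2) by (simp add: l_def)
  moreover have "F.eval l x = \<zero>\<^bsub>CR\<^esub>"
    using p(3) by (simp add: CR_eval l_def)
  ultimately show ?thesis by (rule F.algebraicI)
qed

lemma CR_to_alg:
  assumes "(ring.algebraic CR over \<rat>) (x::complex)"
  shows "algebraic x"
proof -
  interpret F: field CR by (rule CR_field)
  obtain l where l: "l \<in> carrier (\<rat>[X]\<^bsub>CR\<^esub>)" "l \<noteq> []" "F.eval l x = \<zero>\<^bsub>CR\<^esub>"
    using F.algebraicE[OF subfieldE(1)[OF Rats_subfield] _ assms] by auto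
  have sl: "set l \<subseteq> \<rat>" and hl: "hd l \<noteq> 0"
    using l(1,2) by (auto simp: univ_poly_def polynomial_def)
  define p where "p = Poly (rev l)"
  have "\<forall>i. poly.coeff p i \<in> \<rat>"
  proof
    fix i show "poly.coeff p i \<in> \<rat>"
    proof (cases "i < length l")
      case True
      then have "rev l ! i \<in> set (rev l)" by (intro nth_mem) simp
      then show ?thesis using sl by (auto simp: p_def nth_default_def)
    qed (simp add: p_def nth_default_def)
  qed
  moreover have "p \<noteq> 0"
  proof
    assume "p = 0"
    then have "poly.coeff p (length l - 1) = 0" by simp
    moreover have "poly.coeff p (length l - 1) = hd l"
      using l(2) by (simp add: p_def nth_default_def rev_nth hd_conv_nth)
    ultimately show False using hl by simp
  qed
  moreover have "poly p x = 0" using l(3) by (simp add: CR_eval p_def)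
  ultimately show ?thesis using algebraic_altdef by blast
qed

lemma algebraic_add_mult:
  assumes "algebraic (x::complex)" "algebraic y"
  shows "algebraic (x + y)" "algebraic (x * y)"
proof -
  interpret F: field CR by (rule CR_field)
  have S: "subfield {z \<in> carrier CR. (F.algebraic over \<rat>) z} CR"
    by (rule F.subfield_of_algebraics[OF Rats_subfield])
  have "x \<in> {z \<in> carrier CR. (F.algebraic over \<rat>) z}" "y \<in> {z \<in> carrier CR. (F.algebraic over \<rat>) z}"
    using alg_to_CR assms by auto
  then have "x \<oplus>\<^bsub>CR\<^esub> y \<in> {z \<in> carrier CR. (F.algebraic over \<rat>) z}"
     "x \<otimes>\<^bsub>CR\<^esub> y \<in> {z \<in> carrier CR. (F.algebraic over \<rat>) z}"
    using subringE(6,7)[OF subfieldE(1)[OF S]] by blast+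
  then show "algebraic (x + y)" "algebraic (x * y)" using CR_to_alg by auto
qed



typedef alg = "{x::complex. algebraic x}" morphisms of_alg Abs_alg
  by (rule exI[of _ 0]) simp

setup_lifting type_definition_alg

instantiation alg :: field
begin
lift_definition zero_alg :: alg is 0 by simp
lift_definition one_alg :: alg is 1 by simp
lift_definition plus_alg :: "alg \<Rightarrow> alg \<Rightarrow> alg" is "(+)" by (rule algebraic_add_mult)
lift_definition uminus_alg :: "alg \<Rightarrow> alg" is uminus by auto
lift_definition minus_alg :: "alg \<Rightarrow> alg \<Rightarrow> alg" is "(-)"
  using algebraic_add_mult(1) algebraic_minus by (metis diff_conv_add_uminus)
lift_definition times_alg :: "alg \<Rightarrow> alg \<Rightarrow> alg" is "(*)" by (rule algebraic_add_mult)
lift_definition inverse_alg :: "alg \<Rightarrow> alg" is inverse by auto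
lift_definition divide_alg :: "alg \<Rightarrow> alg \<Rightarrow> alg" is "(/)"
  using algebraic_add_mult(2) algebraic_inverse by (metis divide_inverse)
instance
  by standard (transfer; simp add: field_simps)+
end

lemma of_alg_algebraic[simp]: "algebraic (of_alg a)"
  using of_alg by simp

lemma of_alg_inj[simp]: "of_alg a = of_alg b \<longleftrightarrow> a = b"
  by (simp add: of_alg_inject)

lemma of_alg_Abs[simp]: "algebraic x \<Longrightarrow> of_alg (Abs_alg x) = x"
  by (simp add: Abs_alg_inverse)

interpretation of_alg_hom: field_hom of_alg
  by unfold_locales (transfer, simp)+

lemma of_alg_eq_0[simp]: "of_alg a = 0 \<longleftrightarrow> a = 0"
  by (metis of_alg_hom.hom_zero of_alg_inj)

lemma qp_sum: "finite S \<Longrightarrow> (\<And>s. s \<in> S \<Longrightarrow> qbar_poly N (f s)) \<Longrightarrow> qbar_poly N (\<lambda>x. \<Sum>s\<in>S. f s x)"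
proof (induct S rule: finite_induct)
  case empty then show ?case using qbar_poly.const[of 0 N] by simp
next
  case (insert a S) then show ?case using qbar_poly.add[of N "f a" "\<lambda>x. \<Sum>s\<in>S. f s x"] by simp
qed

lemma qp_prod: "finite S \<Longrightarrow> (\<And>s. s \<in> S \<Longrightarrow> qbar_poly N (f s)) \<Longrightarrow> qbar_poly N (\<lambda>x. \<Prod>s\<in>S. f s x)"
proof (induct S rule: finite_induct)
  case empty then show ?case using qbar_poly.const[of 1 N] by simp
next
  case (insert a S) then show ?case using qbar_poly.mult[of N "f a" "\<lambda>x. \<Prod>s\<in>S. f s x"] by simp
qed

lemma qp_comp: "qbar_poly N p \<Longrightarrow> (\<And>i. i \<le> N \<Longrightarrow> qbar_poly N (\<lambda>x. L x i)) \<Longrightarrow> qbar_poly N (\<lambda>x. p (L x))"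
proof (induct rule: qbar_poly.induct)
  case (const c) then show ?case by (simp add: qbar_poly.const)
next
  case (var i) then show ?case by simp
next
  case (add p q) then show ?case using qbar_poly.add by blast
next
  case (mult p q) then show ?case using qbar_poly.mult by blast
qed

lemma qp_alg: "qbar_poly N (\<lambda>x. of_alg a)"
  by (rule qbar_poly.const) simp

lemma qp_var: "i < Suc N \<Longrightarrow> qbar_poly N (\<lambda>x. x i)"
  by (rule qbar_poly.var) simp

lemma dense_crit:
  assumes "\<And>p. homog_poly N p \<Longrightarrow> (\<forall>y\<in>S. p y = 0) \<Longrightarrow> (\<forall>y\<in>proj_pts N. p y = 0)"
  shows "zariski_dense N S"
  unfolding zariski_dense_def
proof (intro allI impI)
  fix Z assume Z: "zariski_closed N Z \<and> S \<subseteq> Z"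
  then obtain F where F: "\<forall>p\<in>F. homog_poly N p" "Z = zariski_zero N F"
    unfolding zariski_closed_def by auto
  have "\<forall>p\<in>F. \<forall>y\<in>S. p y = 0" using Z F by (auto simp: zariski_zero_def)
  then have "\<forall>p\<in>F. \<forall>y\<in>proj_pts N. p y = 0" using assms F(1) by blast
  then show "Z = proj_pts N" using F(2) by (auto simp: zariski_zero_def)
qed

lemma dense_use:
  assumes "zariski_dense N S" "S \<subseteq> proj_pts N" "homog_poly N p" "\<forall>y\<in>S. p y = 0" "y \<in> proj_pts N"
  shows "p y = 0"
proof -
  have "zariski_closed N (zariski_zero N {p})"
    unfolding zariski_closed_def using assms(3) by blast
  moreover have "S \<subseteq> zariski_zero N {p}" using assms(2,4) by (auto simp: zariski_zero_def)
  ultimately have "zariski_zero N {p} = proj_pts N" using assms(1) unfolding zariski_dense_def by blast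
  then show ?thesis using assms(5) by (auto simp: zariski_zero_def)
qed



lemma pow_comm: "M \<in> carrier_mat n n \<Longrightarrow> M * (M ^\<^sub>m k) = (M ^\<^sub>m k) * M"
proof (induct k)
  case 0 then show ?case by simp
next
  case (Suc k)
  have "M * M ^\<^sub>m Suc k = (M * M ^\<^sub>m k) * M"
    using Suc(2) by (simp add: assoc_mult_mat[of M n n "M ^\<^sub>m k" n M n])
  also have "\<dots> = (M ^\<^sub>m k * M) * M" using Suc by simp
  finally show ?case by simp
qed

lemma pow_add: "M \<in> carrier_mat n n \<Longrightarrow> (M ^\<^sub>m j) * (M ^\<^sub>m k) = M ^\<^sub>m (j + k)"
proof (induct k)
  case 0 then show ?case by simp
next
  case (Suc k)
  have "M ^\<^sub>m j * M ^\<^sub>m Suc k = (M ^\<^sub>m j * M ^\<^sub>m k) * M"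
    using Suc(2) by (simp add: assoc_mult_mat[symmetric, of _ n n _ n _ n])
  then show ?case using Suc by simp
qed

lemma pow_inv: assumes "M \<in> carrier_mat n n" "B \<in> carrier_mat n n" "B * M = 1\<^sub>m n"
  shows "(B ^\<^sub>m k) * (M ^\<^sub>m k) = 1\<^sub>m n"
proof (induct k)
  case 0 then show ?case using assms by simp
next
  case (Suc k)
  have "B ^\<^sub>m Suc k * M ^\<^sub>m Suc k = (B ^\<^sub>m k * B) * (M ^\<^sub>m k * M)" by simp
  also have "\<dots> = (B * B ^\<^sub>m k) * (M ^\<^sub>m k * M)" using pow_comm[OF assms(2), of k] by simp
  also have "\<dots> = B * ((B ^\<^sub>m k) * (M ^\<^sub>m k)) * M"
  proof -
    have asc: "\<And>U1 U2 U3. U1 \<in> carrier_mat n n \<Longrightarrow> U2 \<in> carrier_mat n n \<Longrightarrow> U3 \<in> carrier_mat n n \<Longrightarrow> U1 * U2 * U3 = U1 * (U2 * U3)"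
      by (rule assoc_mult_mat)
    have c1: "M ^\<^sub>m k * M \<in> carrier_mat n n" "B ^\<^sub>m k * M ^\<^sub>m k \<in> carrier_mat n n"
      "M ^\<^sub>m k \<in> carrier_mat n n" "B ^\<^sub>m k \<in> carrier_mat n n"
      using assms by (auto intro: mult_carrier_mat)
    have "B * B ^\<^sub>m k * (M ^\<^sub>m k * M) = B * (B ^\<^sub>m k * (M ^\<^sub>m k * M))"
      by (rule asc) (use c1 assms in auto)
    also have "\<dots> = B * ((B ^\<^sub>m k * M ^\<^sub>m k) * M)"
      using asc[of "B ^\<^sub>m k" "M ^\<^sub>m k" M] c1 assms by metis
    also have "\<dots> = B * (B ^\<^sub>m k * M ^\<^sub>m k) * M"
      by (rule asc[symmetric]) (use c1 assms in auto)
    finally show ?thesis .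
  qed
  finally have "B ^\<^sub>m Suc k * M ^\<^sub>m Suc k = B * ((B ^\<^sub>m k) * (M ^\<^sub>m k)) * M" .
  then show ?case using Suc assms by simp
qed

locale dyn =
  fixes N :: nat and A :: "nat \<Rightarrow> nat \<Rightarrow> complex"
  assumes inv: "qbar_invertible N A"
begin

abbreviation "n \<equiv> Suc N"

definition AA :: "alg mat" where "AA = mat n n (\<lambda>(i,j). Abs_alg (A i j))"
definition emb :: "alg vec \<Rightarrow> nat \<Rightarrow> complex" where
  "emb v = (\<lambda>i. if i < n then of_alg (v $ i) else 0)"
definition tov :: "(nat \<Rightarrow> complex) \<Rightarrow> alg vec" where "tov x = vec n (\<lambda>i. Abs_alg (x i))"
definition cm :: "alg mat \<Rightarrow> nat \<Rightarrow> nat \<Rightarrow> complex" where "cm M = (\<lambda>i j. of_alg (M $$ (i,j)))"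

abbreviation "f \<equiv> mat_apply N A"

lemma AA_carrier[simp]: "AA \<in> carrier_mat n n" by (simp add: AA_def)
lemma AA_dim[simp]: "dim_row AA = n" "dim_col AA = n" by (simp_all add: AA_def)

lemma A_alg: "i \<le> N \<Longrightarrow> j \<le> N \<Longrightarrow> algebraic (A i j)"
  using inv unfolding qbar_invertible_def by auto

lemma AA_inv: "\<exists>BB. BB \<in> carrier_mat n n \<and> BB * AA = 1\<^sub>m n"
proof -
  obtain B where B: "\<forall>i\<le>N. \<forall>j\<le>N. algebraic (B i j)"
    "\<forall>i\<le>N. \<forall>k\<le>N. (\<Sum>j\<le>N. B i j * A j k) = (if i = k then 1 else 0)"
    using inv unfolding qbar_invertible_def by (elim conjE exE) (rule that; assumption)
  define BB where "BB = mat n n (\<lambda>(i,j). Abs_alg (B i j))"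
  have "BB * AA = 1\<^sub>m n"
  proof (rule eq_matI)
    fix i j assume ij: "i < dim_row (1\<^sub>m n)" "j < dim_col (1\<^sub>m n)"
    then have "(BB * AA) $$ (i,j) = (\<Sum>k\<le>N. Abs_alg (B i k) * Abs_alg (A k j))"
      by (simp add: BB_def AA_def scalar_prod_def atLeast0LessThan lessThan_Suc_atMost)
    then have "of_alg ((BB * AA) $$ (i,j)) = (\<Sum>k\<le>N. of_alg (Abs_alg (B i k)) * of_alg (Abs_alg (A k j)))"
      by (simp only: of_alg_hom.hom_sum of_alg_hom.hom_mult)
    also have "\<dots> = (\<Sum>k\<le>N. B i k * A k j)"
      using B(1) A_alg ij by (intro sum.cong) auto
    also have "\<dots> = (if i = j then 1 else 0)" using B(2) ij by simp
    finally have "of_alg ((BB * AA) $$ (i,j)) = of_alg (1\<^sub>m n $$ (i,j))" using ij by simp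
    then show "(BB * AA) $$ (i,j) = 1\<^sub>m n $$ (i,j)" by simp
  qed (simp_all add: BB_def AA_def)
  then show ?thesis by (intro exI[of _ BB]) (simp add: BB_def)
qed

lemma tov_carrier[simp]: "tov x \<in> carrier_vec n" by (simp add: tov_def)

lemma emb_tov: "x \<in> proj_pts N \<Longrightarrow> emb (tov x) = x"
  unfolding proj_pts_def qbar_vec_def emb_def tov_def
  by (auto simp: fun_eq_iff less_Suc_eq_le)

lemma tov_nz: "x \<in> proj_pts N \<Longrightarrow> tov x \<noteq> 0\<^sub>v n"
proof
  assume x: "x \<in> proj_pts N" and "tov x = 0\<^sub>v n"
  then have "emb (tov x) = (\<lambda>i. 0)" by (auto simp: emb_def fun_eq_iff)
  then show False using x emb_tov[OF x] unfolding proj_pts_def by auto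
qed

lemma emb_proj: assumes "v \<in> carrier_vec n" "v \<noteq> 0\<^sub>v n" shows "emb v \<in> proj_pts N"
proof -
  obtain i where i: "i < n" "v $ i \<noteq> 0" using assms by (metis carrier_vecD eq_vecI index_zero_vec)
  then show ?thesis unfolding proj_pts_def qbar_vec_def emb_def
    by (auto intro!: exI[of _ i])
qed

lemma emb_tov_app: assumes "v \<in> carrier_vec n" shows "tov (emb v) = v"
  using assms by (auto simp: tov_def emb_def of_alg_inverse)

lemma matapp: assumes "M \<in> carrier_mat n n" "v \<in> carrier_vec n"
  shows "mat_apply N (cm M) (emb v) = emb (M *\<^sub>v v)"
proof
  fix i
  show "mat_apply N (cm M) (emb v) i = emb (M *\<^sub>v v) i"
  proof (cases "i \<le> N")
    case True
    then have "mat_apply N (cm M) (emb v) i = (\<Sum>j\<le>N. of_alg (M $$ (i,j)) * of_alg (v $ j))"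
      by (auto simp: mat_apply_def cm_def emb_def intro!: sum.cong)
    also have "\<dots> = of_alg (\<Sum>j\<le>N. M $$ (i,j) * v $ j)"
      by (simp only: of_alg_hom.hom_sum of_alg_hom.hom_mult)
    also have "\<dots> = of_alg ((M *\<^sub>v v) $ i)"
      using assms True by (simp add: scalar_prod_def atLeast0LessThan lessThan_Suc_atMost)
    finally show ?thesis using True assms by (simp add: emb_def)
  qed (simp add: mat_apply_def emb_def)
qed

lemma f_cm: "f = mat_apply N (cm AA)"
  by (auto simp: fun_eq_iff mat_apply_def cm_def AA_def A_alg intro!: sum.cong)

lemma f_iter: "v \<in> carrier_vec n \<Longrightarrow> (f ^^ k) (emb v) = emb ((AA ^\<^sub>m k) *\<^sub>v v)"
proof (induct k)
  case 0 then show ?case by simp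
next
  case (Suc k)
  have "(f ^^ Suc k) (emb v) = mat_apply N (cm AA) (emb ((AA ^\<^sub>m k) *\<^sub>v v))"
    using Suc f_cm by simp
  also have "\<dots> = emb (AA *\<^sub>v ((AA ^\<^sub>m k) *\<^sub>v v))"
    using Suc by (simp add: matapp mult_mat_vec_carrier[of _ n n])
  also have "AA *\<^sub>v ((AA ^\<^sub>m k) *\<^sub>v v) = (AA ^\<^sub>m Suc k) *\<^sub>v v"
    using Suc pow_comm[OF AA_carrier, of k] by (simp add: assoc_mult_mat_vec[symmetric, of _ n n _ n])
  finally show ?case .
qed

lemma pow_nz: assumes "v \<in> carrier_vec n" "v \<noteq> 0\<^sub>v n" shows "(AA ^\<^sub>m k) *\<^sub>v v \<noteq> 0\<^sub>v n"
proof
  assume h: "(AA ^\<^sub>m k) *\<^sub>v v = 0\<^sub>v n"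
  obtain BB where BB: "BB \<in> carrier_mat n n" "BB * AA = 1\<^sub>m n" using AA_inv by blast
  have "v = ((BB ^\<^sub>m k) * (AA ^\<^sub>m k)) *\<^sub>v v" using pow_inv[OF AA_carrier BB] assms by simp
  also have "\<dots> = (BB ^\<^sub>m k) *\<^sub>v 0\<^sub>v n" using h assms BB by (simp add: assoc_mult_mat_vec[of _ n n _ n])
  also have "\<dots> = 0\<^sub>v n" using BB by (intro eq_vecI) (auto simp: scalar_prod_def)
  finally show False using assms by simp
qed

lemma orbit_proj: assumes "v \<in> carrier_vec n" "v \<noteq> 0\<^sub>v n" shows "orbit f (emb v) \<subseteq> proj_pts N"
proof
  fix y assume "y \<in> orbit f (emb v)"
  then obtain k where "y = (f ^^ k) (emb v)" by (auto simp: orbit_def)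
  then have "y = emb ((AA ^\<^sub>m k) *\<^sub>v v)" using f_iter assms by simp
  then show "y \<in> proj_pts N" using assms pow_nz[OF assms, of k]
    by (auto intro!: emb_proj simp: mult_mat_vec_carrier[of _ n n])
qed

end


declare sum.lessThan_Suc[simp del] prod.lessThan_Suc[simp del]

locale dsetup = dyn +
  fixes P :: "nat \<Rightarrow> complex"
  assumes Pd: "P \<in> dense_orbit_pts N (mat_apply N A)"
begin

definition PP :: "alg vec" where "PP = tov P"
definition KK :: "alg mat" where "KK = mat n n (\<lambda>(i,k). ((AA ^\<^sub>m k) *\<^sub>v PP) $ i)"

lemma P_proj: "P \<in> proj_pts N" using Pd by (simp add: dense_orbit_pts_def)
lemma P_dense: "zariski_dense N (orbit f P)" using Pd by (simp add: dense_orbit_pts_def)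
lemma PP_carrier[simp]: "PP \<in> carrier_vec n" by (simp add: PP_def)
lemma PP_nz: "PP \<noteq> 0\<^sub>v n" using tov_nz[OF P_proj] by (simp add: PP_def)
lemma P_emb: "emb PP = P" using emb_tov[OF P_proj] by (simp add: PP_def)
lemma orbitP_proj: "orbit f P \<subseteq> proj_pts N" using orbit_proj[OF PP_carrier PP_nz] P_emb by simp
lemma KK_carrier[simp]: "KK \<in> carrier_mat n n" by (simp add: KK_def)

lemma powv_carrier[simp]: "v \<in> carrier_vec n \<Longrightarrow> (AA ^\<^sub>m k) *\<^sub>v v \<in> carrier_vec n"
  by (rule mult_mat_vec_carrier[of _ n n]) auto

lemma orbitP_elem: "(f ^^ j) P = emb ((AA ^\<^sub>m j) *\<^sub>v PP)"
  using f_iter[OF PP_carrier] P_emb by simp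

lemma lin_form_contra:
  assumes l: "l \<in> carrier_vec n" "l \<noteq> 0\<^sub>v n"
    and u: "\<And>j. (\<Sum>i<n. ((AA ^\<^sub>m j) *\<^sub>v PP) $ i * l $ i) = 0"
  shows False
proof -
  define lf where "lf = (\<lambda>x::nat\<Rightarrow>complex. \<Sum>i<n. of_alg (l $ i) * x i)"
  have hp: "homog_poly N lf"
    unfolding homog_poly_def
  proof
    show "qbar_poly N lf" unfolding lf_def
      by (intro qp_sum qbar_poly.mult qp_alg qp_var) auto
    show "\<exists>d. \<forall>c x. lf (\<lambda>i. c * x i) = c ^ d * lf x"
    proof (intro exI allI)
      fix c x
      show "lf (\<lambda>i. c * x i) = c ^ 1 * lf x"
        unfolding lf_def power_one_right by (simp only: sum_distrib_left) (simp only: mult_ac)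
    qed
  qed
  have "\<forall>y\<in>orbit f P. lf y = 0"
  proof
    fix y assume "y \<in> orbit f P"
    then obtain j where "y = emb ((AA ^\<^sub>m j) *\<^sub>v PP)" by (auto simp: orbit_def orbitP_elem)
    then have "lf y = (\<Sum>i<n. of_alg (l $ i) * of_alg (((AA ^\<^sub>m j) *\<^sub>v PP) $ i))"
      by (simp add: lf_def emb_def)
    also have "\<dots> = of_alg (\<Sum>i<n. ((AA ^\<^sub>m j) *\<^sub>v PP) $ i * l $ i)"
      unfolding of_alg_hom.hom_sum of_alg_hom.hom_mult by (intro sum.cong refl) (simp add: mult.commute)
    also have "\<dots> = 0" using u by simp
    finally show "lf y = 0" .
  qed
  obtain i0 where i0: "i0 < n" "l $ i0 \<noteq> 0" using l by (metis carrier_vecD eq_vecI index_zero_vec)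
  have y0: "emb (unit_vec n i0) \<in> proj_pts N" using i0 by (intro emb_proj) auto
  have "lf (emb (unit_vec n i0)) = 0"
    by (rule dense_use[OF P_dense orbitP_proj hp]) (use \<open>\<forall>y\<in>orbit f P. lf y = 0\<close> y0 in auto)
  moreover have "lf (emb (unit_vec n i0)) = of_alg (l $ i0)"
  proof -
    have "lf (emb (unit_vec n i0)) = (\<Sum>i<n. if i = i0 then of_alg (l $ i0) else 0)"
      unfolding lf_def emb_def using i0 by (intro sum.cong) auto
    also have "\<dots> = of_alg (l $ i0)" using i0 by simp
    finally show ?thesis .
  qed
  ultimately show False using i0 by simp
qed

lemma KKj: assumes "i < n" "k < n"
  shows "(AA ^\<^sub>m j * KK) $$ (i,k) = ((AA ^\<^sub>m (j+k)) *\<^sub>v PP) $ i"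
proof -
  have "col KK k = (AA ^\<^sub>m k) *\<^sub>v PP"
    using assms by (intro eq_vecI) (auto simp: KK_def)
  then have "(AA ^\<^sub>m j * KK) $$ (i,k) = row (AA ^\<^sub>m j) i \<bullet> ((AA ^\<^sub>m k) *\<^sub>v PP)"
    using assms by (subst index_mult_mat(1)) (auto simp: KK_def)
  also have "\<dots> = ((AA ^\<^sub>m j) *\<^sub>v ((AA ^\<^sub>m k) *\<^sub>v PP)) $ i" using assms by simp
  also have "(AA ^\<^sub>m j) *\<^sub>v ((AA ^\<^sub>m k) *\<^sub>v PP) = (AA ^\<^sub>m j * AA ^\<^sub>m k) *\<^sub>v PP"
    by (rule assoc_mult_mat_vec[symmetric, of _ n n _ n]) auto
  also have "AA ^\<^sub>m j * AA ^\<^sub>m k = AA ^\<^sub>m (j+k)" by (rule pow_add[OF AA_carrier])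
  finally show ?thesis .
qed

lemma KK_det: "det KK \<noteq> 0"
proof
  assume "det KK = 0"
  then obtain c where c: "c \<in> carrier_vec n" "c \<noteq> 0\<^sub>v n" "KK *\<^sub>v c = 0\<^sub>v n"
    using det_0_iff_vec_prod_zero_field[OF KK_carrier] by blast
  define S where "S = {k. k < n \<and> c $ k \<noteq> 0}"
  have Sne: "S \<noteq> {}"
  proof
    assume "S = {}"
    then have "\<And>k. k < n \<Longrightarrow> c $ k = 0" unfolding S_def by auto
    then have "c = 0\<^sub>v n" using c(1) by (intro eq_vecI) auto
    then show False using c(2) by simp
  qed
  have Sfin: "finite S" unfolding S_def by simp
  define m where "m = Max S"
  have m: "m < n" "c $ m \<noteq> 0" using Max_in[OF Sfin Sne] unfolding m_def S_def by auto
  have mz: "\<And>k. m < k \<Longrightarrow> k < n \<Longrightarrow> c $ k = 0"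
    using Max_ge[OF Sfin] unfolding m_def S_def by fastforce
  define R where "R = mat n n (\<lambda>(k,i). if k < m then ((AA ^\<^sub>m k) *\<^sub>v PP) $ i else 0)"
  have Rc: "R \<in> carrier_mat n n" by (simp add: R_def)
  have "transpose_mat R *\<^sub>v unit_vec n N = 0\<^sub>v n"
  proof (rule eq_vecI)
    fix i assume "i < dim_vec (0\<^sub>v n)"
    then have i: "i < n" by simp
    have "(transpose_mat R *\<^sub>v unit_vec n N) $ i = (\<Sum>l\<in>{0..<n}. R $$ (l, i) * (if l = N then 1 else 0))"
      using i Rc by (simp add: scalar_prod_def)
    also have "\<dots> = R $$ (N, i)" by simp
    also have "\<dots> = 0" using m i by (simp add: R_def)
    finally show "(transpose_mat R *\<^sub>v unit_vec n N) $ i = 0\<^sub>v n $ i" using i by simp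
  qed (simp add: R_def)
  then have "det (transpose_mat R) = 0"
    using det_0_iff_vec_prod_zero_field[of "transpose_mat R" n] Rc
    by (metis lessI transpose_carrier_mat unit_vec_carrier unit_vec_nonzero)
  then have "det R = 0" using det_transpose[OF Rc] by simp
  then obtain l where l: "l \<in> carrier_vec n" "l \<noteq> 0\<^sub>v n" "R *\<^sub>v l = 0\<^sub>v n"
    using det_0_iff_vec_prod_zero_field[OF Rc] by blast
  define u where "u = (\<lambda>j. \<Sum>i<n. ((AA ^\<^sub>m j) *\<^sub>v PP) $ i * l $ i)"
  have ulow: "u j = 0" if "j < m" for j
  proof -
    have "0 = (R *\<^sub>v l) $ j" using l m that by simp
    also have "\<dots> = u j" using that m l(1) by (simp add: R_def u_def scalar_prod_def atLeast0LessThan)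
    finally show ?thesis by simp
  qed
  have rec: "(\<Sum>k<n. c $ k * u (j + k)) = 0" for j
  proof -
    have X0: "(\<Sum>k<n. ((AA ^\<^sub>m (j+k)) *\<^sub>v PP) $ i * c $ k) = 0" if i: "i < n" for i
    proof -
      have "(AA ^\<^sub>m j * KK) *\<^sub>v c = (AA ^\<^sub>m j) *\<^sub>v (KK *\<^sub>v c)"
        using c by (intro assoc_mult_mat_vec[of _ n n _ n]) auto
      also have "\<dots> = 0\<^sub>v n" using c by (intro eq_vecI) (auto simp: scalar_prod_def)
      finally have "((AA ^\<^sub>m j * KK) *\<^sub>v c) $ i = 0" using i by simp
      moreover have "((AA ^\<^sub>m j * KK) *\<^sub>v c) $ i = (\<Sum>k<n. (AA ^\<^sub>m j * KK) $$ (i,k) * c $ k)"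
      proof -
        have dimKj: "AA ^\<^sub>m j * KK \<in> carrier_mat n n" by (intro mult_carrier_mat[of _ n n]) auto
        have "((AA ^\<^sub>m j * KK) *\<^sub>v c) $ i = row (AA ^\<^sub>m j * KK) i \<bullet> c"
          using i carrier_matD[OF dimKj] by simp
        also have "\<dots> = (\<Sum>k<n. row (AA ^\<^sub>m j * KK) i $ k * c $ k)"
          unfolding scalar_prod_def using c(1) by (simp only: carrier_vecD atLeast0LessThan)
        also have "\<dots> = (\<Sum>k<n. (AA ^\<^sub>m j * KK) $$ (i,k) * c $ k)"
          using i carrier_matD[OF dimKj] by (intro sum.cong refl) simp
        finally show ?thesis .
      qed
      moreover have "\<dots> = (\<Sum>k<n. ((AA ^\<^sub>m (j+k)) *\<^sub>v PP) $ i * c $ k)"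
        using i by (intro sum.cong) (auto simp: KKj)
      ultimately show ?thesis by simp
    qed
    have "(\<Sum>k<n. c $ k * u (j + k)) = (\<Sum>k<n. \<Sum>i<n. c $ k * (((AA ^\<^sub>m (j+k)) *\<^sub>v PP) $ i * l $ i))"
      by (simp add: u_def sum_distrib_left)
    also have "\<dots> = (\<Sum>i<n. \<Sum>k<n. c $ k * (((AA ^\<^sub>m (j+k)) *\<^sub>v PP) $ i * l $ i))"
      by (rule sum.swap)
    also have "\<dots> = (\<Sum>i<n. l $ i * (\<Sum>k<n. ((AA ^\<^sub>m (j+k)) *\<^sub>v PP) $ i * c $ k))"
      by (simp add: sum_distrib_left mult_ac)
    also have "\<dots> = 0" using X0 by simp
    finally show ?thesis .
  qed
  have rec2: "c $ m * u (j + m) = - (\<Sum>k<m. c $ k * u (j + k))" for j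
  proof -
    have "(\<Sum>k<n. c $ k * u (j + k)) = (\<Sum>k<Suc m. c $ k * u (j + k))"
      using m mz by (intro sum.mono_neutral_cong_right) auto
    also have "\<dots> = (\<Sum>k<m. c $ k * u (j + k)) + c $ m * u (j + m)" by (rule sum.lessThan_Suc)
    finally have "(\<Sum>k<m. c $ k * u (j + k)) + c $ m * u (j + m) = 0" using rec[of j] by simp
    then show ?thesis by (metis add.commute eq_neg_iff_add_eq_0)
  qed
  have uz: "u j = 0" for j
  proof (induct j rule: less_induct)
    case (less j)
    show ?case
    proof (cases "j < m")
      case True then show ?thesis by (rule ulow)
    next
      case False
      then obtain j' where j': "j = j' + m" by (metis add.commute le_add_diff_inverse not_less)
      have "(\<Sum>k<m. c $ k * u (j' + k)) = 0"
        using less j' by (intro sum.neutral) auto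
      then have "c $ m * u j = 0" using rec2[of j'] j' by simp
      then show ?thesis using m by simp
    qed
  qed
  show False by (rule lin_form_contra[OF l(1,2)]) (use uz in \<open>simp add: u_def\<close>)
qed

end


lemma mv_sum: assumes "M \<in> carrier_mat n n" "v \<in> carrier_vec n" "i < n"
  shows "(M *\<^sub>v v) $ i = (\<Sum>j<n. M $$ (i,j) * v $ j)"
proof -
  have "(M *\<^sub>v v) $ i = row M i \<bullet> v" using assms by simp
  also have "\<dots> = (\<Sum>j<n. row M i $ j * v $ j)"
    unfolding scalar_prod_def by (simp only: carrier_vecD[OF assms(2)] atLeast0LessThan)
  also have "\<dots> = (\<Sum>j<n. M $$ (i,j) * v $ j)"
    using assms by (intro sum.cong refl) auto
  finally show ?thesis .
qed

lemma mat_inv_ex: assumes "M \<in> carrier_mat n n" "det M \<noteq> (0::alg)"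
  shows "\<exists>Mi. Mi \<in> carrier_mat n n \<and> Mi * M = 1\<^sub>m n \<and> M * Mi = 1\<^sub>m n"
  using det_non_zero_imp_unit[OF assms, of "()"] by (auto simp: Units_def ring_mat_simps)

context dsetup
begin

definition KI :: "alg mat" where
  "KI = (SOME Mi. Mi \<in> carrier_mat n n \<and> Mi * KK = 1\<^sub>m n \<and> KK * Mi = 1\<^sub>m n)"

lemma KI: "KI \<in> carrier_mat n n" "KI * KK = 1\<^sub>m n" "KK * KI = 1\<^sub>m n"
  using someI_ex[OF mat_inv_ex[OF KK_carrier KK_det]] unfolding KI_def by auto

definition Gm :: "alg vec \<Rightarrow> alg mat" where
  "Gm c = mat n n (\<lambda>(i,j). \<Sum>k<n. c $ k * (AA ^\<^sub>m k) $$ (i,j))"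

lemma Gm_carrier[simp]: "Gm c \<in> carrier_mat n n" by (simp add: Gm_def)

lemma Gm_comm: "Gm c * AA = AA * Gm c"
proof (rule eq_matI)
  fix i j assume ij: "i < dim_row (AA * Gm c)" "j < dim_col (AA * Gm c)"
  then have i: "i < n" and j: "j < n" by (simp_all add: Gm_def)
  have pc: "\<And>k. AA ^\<^sub>m k \<in> carrier_mat n n" by simp
  have "(Gm c * AA) $$ (i,j) = (\<Sum>l<n. (\<Sum>k<n. c $ k * (AA ^\<^sub>m k) $$ (i,l)) * AA $$ (l,j))"
    using i j by (simp add: Gm_def scalar_prod_def atLeast0LessThan)
  also have "\<dots> = (\<Sum>k<n. c $ k * (\<Sum>l<n. (AA ^\<^sub>m k) $$ (i,l) * AA $$ (l,j)))"
    by (simp only: sum_distrib_left sum_distrib_right) (subst sum.swap, simp add: mult_ac)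
  also have "\<dots> = (\<Sum>k<n. c $ k * (AA ^\<^sub>m k * AA) $$ (i,j))"
    using i j carrier_matD[OF pc] by (intro sum.cong refl) (simp add: scalar_prod_def atLeast0LessThan)
  also have "\<dots> = (\<Sum>k<n. c $ k * (AA * AA ^\<^sub>m k) $$ (i,j))"
    using pow_comm[OF AA_carrier] by simp
  also have "\<dots> = (\<Sum>k<n. c $ k * (\<Sum>l<n. AA $$ (i,l) * (AA ^\<^sub>m k) $$ (l,j)))"
    using i j carrier_matD[OF pc] by (intro sum.cong refl) (simp add: scalar_prod_def atLeast0LessThan)
  also have "\<dots> = (\<Sum>l<n. AA $$ (i,l) * (\<Sum>k<n. c $ k * (AA ^\<^sub>m k) $$ (l,j)))"
    by (simp only: sum_distrib_left sum_distrib_right) (subst sum.swap, simp add: mult_ac)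
  also have "\<dots> = (AA * Gm c) $$ (i,j)"
    using i j by (simp add: Gm_def scalar_prod_def atLeast0LessThan)
  finally show "(Gm c * AA) $$ (i,j) = (AA * Gm c) $$ (i,j)" .
qed (simp_all add: Gm_def)

lemma Gm_pow_comm: "Gm c * AA ^\<^sub>m k = AA ^\<^sub>m k * Gm c"
proof (induct k)
  case 0 then show ?case
    using right_mult_one_mat[OF Gm_carrier[of c]] left_mult_one_mat[OF Gm_carrier[of c]] by simp
next
  case (Suc k)
  have "Gm c * AA ^\<^sub>m Suc k = (Gm c * AA ^\<^sub>m k) * AA"
    by (simp add: assoc_mult_mat[of _ n n _ n _ n])
  also have "\<dots> = AA ^\<^sub>m k * (Gm c * AA)" using Suc
    by (simp add: assoc_mult_mat[of _ n n _ n _ n])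
  also have "\<dots> = AA ^\<^sub>m Suc k * Gm c" using Gm_comm
    by (simp add: assoc_mult_mat[of _ n n _ n _ n])
  finally show ?case .
qed

lemma Gm_PP: assumes "c \<in> carrier_vec n" shows "Gm c *\<^sub>v PP = KK *\<^sub>v c"
proof (rule eq_vecI)
  fix i assume "i < dim_vec (KK *\<^sub>v c)"
  then have i: "i < n" by (simp add: KK_def)
  have pc: "\<And>k. AA ^\<^sub>m k \<in> carrier_mat n n" by simp
  have "(Gm c *\<^sub>v PP) $ i = row (Gm c) i \<bullet> PP" using i by (simp add: Gm_def)
  also have "\<dots> = (\<Sum>j<n. row (Gm c) i $ j * PP $ j)"
    unfolding scalar_prod_def by (simp only: carrier_vecD[OF PP_carrier] atLeast0LessThan)
  also have "\<dots> = (\<Sum>j<n. (\<Sum>k<n. c $ k * (AA ^\<^sub>m k) $$ (i,j)) * PP $ j)"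
    using i by (intro sum.cong refl) (simp add: Gm_def)
  also have "\<dots> = (\<Sum>k<n. (\<Sum>j<n. (AA ^\<^sub>m k) $$ (i,j) * PP $ j) * c $ k)"
    by (simp only: sum_distrib_left sum_distrib_right) (subst sum.swap, simp add: mult_ac)
  also have "\<dots> = (\<Sum>k<n. ((AA ^\<^sub>m k) *\<^sub>v PP) $ i * c $ k)"
    using i by (intro sum.cong refl) (simp add: mv_sum[OF pc PP_carrier i])
  also have "\<dots> = (KK *\<^sub>v c) $ i"
    using i assms by (simp add: KK_def scalar_prod_def atLeast0LessThan)
  finally show "(Gm c *\<^sub>v PP) $ i = (KK *\<^sub>v c) $ i" .
qed (simp add: Gm_def KK_def)

end


context dsetup
begin

definition Dm :: "(nat \<Rightarrow> complex) \<Rightarrow> complex mat" where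
  "Dm x = mat n n (\<lambda>(i,j). \<Sum>k<n. (\<Sum>l<n. of_alg (KI $$ (k,l)) * x l) * of_alg ((AA ^\<^sub>m k) $$ (i,j)))"

definition D :: "(nat \<Rightarrow> complex) \<Rightarrow> complex" where "D x = det (Dm x)"

lemma Dm_carrier[simp]: "Dm x \<in> carrier_mat n n" by (simp add: Dm_def)

lemma D_emb: assumes v: "v \<in> carrier_vec n" shows "D (emb v) = of_alg (det (Gm (KI *\<^sub>v v)))"
proof -
  have "map_mat of_alg (Gm (KI *\<^sub>v v)) = Dm (emb v)"
  proof (rule eq_matI)
    fix i j assume "i < dim_row (Dm (emb v))" "j < dim_col (Dm (emb v))"
    then have i: "i < n" and j: "j < n" by (simp_all add: Dm_def)
    have "map_mat of_alg (Gm (KI *\<^sub>v v)) $$ (i,j) = of_alg (\<Sum>k<n. (KI *\<^sub>v v) $ k * (AA ^\<^sub>m k) $$ (i,j))"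
      using i j by (simp add: Gm_def)
    also have "\<dots> = (\<Sum>k<n. of_alg ((KI *\<^sub>v v) $ k) * of_alg ((AA ^\<^sub>m k) $$ (i,j)))"
      by (simp only: of_alg_hom.hom_sum of_alg_hom.hom_mult)
    also have "\<dots> = (\<Sum>k<n. (\<Sum>l<n. of_alg (KI $$ (k,l)) * emb v l) * of_alg ((AA ^\<^sub>m k) $$ (i,j)))"
    proof (intro sum.cong refl)
      fix k assume "k \<in> {..<n}"
      then have k: "k < n" by simp
      have "of_alg ((KI *\<^sub>v v) $ k) = of_alg (\<Sum>l<n. KI $$ (k,l) * v $ l)"
        using mv_sum[OF KI(1) v k] by simp
      also have "\<dots> = (\<Sum>l<n. of_alg (KI $$ (k,l)) * of_alg (v $ l))"
        by (simp only: of_alg_hom.hom_sum of_alg_hom.hom_mult)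
      also have "\<dots> = (\<Sum>l<n. of_alg (KI $$ (k,l)) * emb v l)"
        by (intro sum.cong refl) (simp add: emb_def)
      finally show "of_alg ((KI *\<^sub>v v) $ k) * of_alg ((AA ^\<^sub>m k) $$ (i,j)) =
         (\<Sum>l<n. of_alg (KI $$ (k,l)) * emb v l) * of_alg ((AA ^\<^sub>m k) $$ (i,j))" by simp
    qed
    also have "\<dots> = Dm (emb v) $$ (i,j)" using i j by (simp add: Dm_def)
    finally show "map_mat of_alg (Gm (KI *\<^sub>v v)) $$ (i,j) = Dm (emb v) $$ (i,j)" .
  qed (simp_all add: Dm_def Gm_def)
  then show ?thesis unfolding D_def using of_alg_hom.hom_det by metis
qed

lemma D_homog: "homog_poly N D"
  unfolding homog_poly_def
proof
  let ?e = "\<lambda>x i j. \<Sum>k<n. (\<Sum>l<n. of_alg (KI $$ (k,l)) * x l) * of_alg ((AA ^\<^sub>m k) $$ (i,j))"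
  have eq: "D = (\<lambda>x. \<Sum>p\<in>{p. p permutes {0..<n}}. signof p * (\<Prod>i\<in>{0..<n}. ?e x i (p i)))"
  proof
    fix x
    show "D x = (\<Sum>p\<in>{p. p permutes {0..<n}}. signof p * (\<Prod>i\<in>{0..<n}. ?e x i (p i)))"
      unfolding D_def det_def'[OF Dm_carrier]
    proof (rule sum.cong[OF refl])
      fix p assume p: "p \<in> {p. p permutes {0..<n}}"
      have "(\<Prod>i\<in>{0..<n}. Dm x $$ (i, p i)) = (\<Prod>i\<in>{0..<n}. ?e x i (p i))"
      proof (rule prod.cong[OF refl])
        fix i assume i: "i \<in> {0..<n}"
        have pp: "p permutes {0..<n}" using p by simp
        have "p i \<in> {0..<n}" using permutes_in_image[OF pp] i by simp
        then show "Dm x $$ (i, p i) = ?e x i (p i)" using i by (simp add: Dm_def)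
      qed
      then show "signof p * (\<Prod>i\<in>{0..<n}. Dm x $$ (i, p i)) = signof p * (\<Prod>i\<in>{0..<n}. ?e x i (p i))"
        by simp
    qed
  qed
  show "qbar_poly N D"
    unfolding eq
    by (intro qp_sum qbar_poly.mult qbar_poly.const qp_prod qp_alg qp_var finite_permutations)
      auto
  have lin: "(\<Sum>l<n. a l * (c * x l)) = c * (\<Sum>l<n. a l * x l)" for a :: "nat \<Rightarrow> complex" and c x
    by (simp add: sum_distrib_left mult_ac)
  show "\<exists>d. \<forall>c x. D (\<lambda>i. c * x i) = c ^ d * D x"
  proof (intro exI allI)
    fix c x
    have "Dm (\<lambda>i. c * x i) = c \<cdot>\<^sub>m Dm x"
    proof (rule eq_matI)
      fix i j assume "i < dim_row (c \<cdot>\<^sub>m Dm x)" "j < dim_col (c \<cdot>\<^sub>m Dm x)"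
      then have i: "i < n" and j: "j < n" by (simp_all add: Dm_def)
      show "Dm (\<lambda>i. c * x i) $$ (i,j) = (c \<cdot>\<^sub>m Dm x) $$ (i,j)"
      proof -
        have "Dm (\<lambda>i. c * x i) $$ (i,j) = (\<Sum>k<n. (c * (\<Sum>l<n. of_alg (KI $$ (k,l)) * x l)) * of_alg ((AA ^\<^sub>m k) $$ (i,j)))"
          using i j by (simp add: Dm_def lin)
        also have "\<dots> = (\<Sum>k<n. c * ((\<Sum>l<n. of_alg (KI $$ (k,l)) * x l) * of_alg ((AA ^\<^sub>m k) $$ (i,j))))"
          by (simp only: mult.assoc)
        also have "\<dots> = c * (\<Sum>k<n. (\<Sum>l<n. of_alg (KI $$ (k,l)) * x l) * of_alg ((AA ^\<^sub>m k) $$ (i,j)))"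
          by (rule sum_distrib_left[symmetric])
        also have "\<dots> = (c \<cdot>\<^sub>m Dm x) $$ (i,j)" using i j by (simp add: Dm_def)
        finally show ?thesis .
      qed
    qed (simp_all add: Dm_def)
    then show "D (\<lambda>i. c * x i) = c ^ n * D x" by (simp add: D_def Dm_def)
  qed
qed

definition U :: "(nat \<Rightarrow> complex) set" where "U = {x \<in> proj_pts N. D x \<noteq> 0}"

lemma U_open: "zariski_open N U"
proof -
  have "proj_pts N - U = zariski_zero N {D}" by (auto simp: U_def zariski_zero_def)
  then show ?thesis unfolding zariski_open_def zariski_closed_def using D_homog
    by (auto simp: U_def)
qed

lemma P_in_U: "P \<in> U"
proof -
  let ?e = "unit_vec n 0 :: alg vec"
  have "KK *\<^sub>v ?e = PP"
  proof (rule eq_vecI)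
    fix i assume "i < dim_vec PP"
    then have i: "i < n" by (simp add: carrier_vecD[OF PP_carrier])
    have "(KK *\<^sub>v ?e) $ i = (\<Sum>j<n. KK $$ (i,j) * ?e $ j)" by (rule mv_sum) (use i in auto)
    also have "\<dots> = (\<Sum>j<n. if j = 0 then KK $$ (i,0) else 0)" by (intro sum.cong refl) auto
    also have "\<dots> = KK $$ (i,0)" by simp
    also have "\<dots> = PP $ i" using i by (simp add: KK_def)
    finally show "(KK *\<^sub>v ?e) $ i = PP $ i" .
  qed (simp add: KK_def carrier_vecD[OF PP_carrier])
  moreover have "(KI * KK) *\<^sub>v ?e = KI *\<^sub>v (KK *\<^sub>v ?e)"
    using KI by (intro assoc_mult_mat_vec[of KI n n KK n]) auto
  ultimately have "KI *\<^sub>v PP = (KI * KK) *\<^sub>v ?e" by simp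
  then have c: "KI *\<^sub>v PP = ?e" using KI by simp
  have "Gm ?e = 1\<^sub>m n"
  proof (rule eq_matI)
    fix i j assume "i < dim_row (1\<^sub>m n)" "j < dim_col (1\<^sub>m n)"
    then have i: "i < n" and j: "j < n" by simp_all
    have "Gm ?e $$ (i,j) = (\<Sum>k<n. ?e $ k * (AA ^\<^sub>m k) $$ (i,j))" using i j by (simp add: Gm_def)
    also have "\<dots> = (\<Sum>k<n. if k = 0 then (AA ^\<^sub>m 0) $$ (i,j) else 0)" by (intro sum.cong refl) auto
    also have "\<dots> = 1\<^sub>m n $$ (i,j)" using i j by simp
    finally show "Gm ?e $$ (i,j) = 1\<^sub>m n $$ (i,j)" .
  qed (simp_all add: Gm_def)
  then have "D P = 1" using D_emb[OF PP_carrier] P_emb c by simp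
  then show ?thesis using P_proj by (simp add: U_def)
qed

lemma U_dense: assumes Q: "Q \<in> U" shows "zariski_dense N (orbit f Q)"
proof -
  have Qp: "Q \<in> proj_pts N" using Q by (simp add: U_def)
  define v where "v = tov Q"
  have v: "v \<in> carrier_vec n" "emb v = Q" using emb_tov[OF Qp] by (simp_all add: v_def)
  define c where "c = KI *\<^sub>v v"
  have cc: "c \<in> carrier_vec n" unfolding c_def using KI(1) v(1) by simp
  define G where "G = Gm c"
  have Gc: "G \<in> carrier_mat n n" by (simp add: G_def)
  have "det G \<noteq> 0" using Q D_emb[OF v(1)] v(2) by (simp add: U_def G_def c_def)
  then obtain GI where GI: "GI \<in> carrier_mat n n" "GI * G = 1\<^sub>m n" "G * GI = 1\<^sub>m n"
    using mat_inv_ex[OF Gc] by blast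
  have GP: "G *\<^sub>v PP = v"
  proof -
    have "G *\<^sub>v PP = KK *\<^sub>v (KI *\<^sub>v v)" using Gm_PP[OF cc] by (simp add: G_def c_def)
    also have "\<dots> = (KK * KI) *\<^sub>v v" using KI v by (intro assoc_mult_mat_vec[symmetric, of KK n n KI n]) auto
    also have "\<dots> = v" using KI v by simp
    finally show ?thesis .
  qed
  show ?thesis
  proof (rule dense_crit)
    fix p assume hp: "homog_poly N p" and van: "\<forall>y\<in>orbit f Q. p y = 0"
    define p' where "p' = (\<lambda>x. p (mat_apply N (cm G) x))"
    have hp': "homog_poly N p'"
      unfolding homog_poly_def
    proof
      show "qbar_poly N p'" unfolding p'_def
      proof (rule qp_comp[where p = p and L = "mat_apply N (cm G)"])
        show "qbar_poly N p" using hp by (simp add: homog_poly_def)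
        fix i assume i: "i \<le> N"
        show "qbar_poly N (\<lambda>x. mat_apply N (cm G) x i)"
          unfolding mat_apply_def using i
          by (simp add: cm_def, intro qp_sum qbar_poly.mult qp_alg qbar_poly.var) auto
      qed
      obtain d where d: "\<forall>c x. p (\<lambda>i. c * x i) = c ^ d * p x" using hp by (auto simp: homog_poly_def)
      have ma: "mat_apply N (cm G) (\<lambda>i. a * x i) = (\<lambda>i. a * mat_apply N (cm G) x i)" for a x
        by (auto simp: mat_apply_def sum_distrib_left mult_ac)
      show "\<exists>d. \<forall>c x. p' (\<lambda>i. c * x i) = c ^ d * p' x"
        by (rule exI[of _ d]) (simp add: p'_def ma d)
    qed
    have "\<forall>y\<in>orbit f P. p' y = 0"
    proof
      fix y assume "y \<in> orbit f P"
      then obtain k where k: "y = emb ((AA ^\<^sub>m k) *\<^sub>v PP)" by (auto simp: orbit_def orbitP_elem)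
      have "p' y = p (emb (G *\<^sub>v ((AA ^\<^sub>m k) *\<^sub>v PP)))"
        unfolding p'_def k by (subst matapp[OF Gc]) auto
      also have "G *\<^sub>v ((AA ^\<^sub>m k) *\<^sub>v PP) = (G * AA ^\<^sub>m k) *\<^sub>v PP"
        by (rule assoc_mult_mat_vec[symmetric, of _ n n _ n]) (auto simp: Gc)
      also have "\<dots> = (AA ^\<^sub>m k * G) *\<^sub>v PP" using Gm_pow_comm by (simp add: G_def)
      also have "\<dots> = (AA ^\<^sub>m k) *\<^sub>v v"
        using GP by (simp add: assoc_mult_mat_vec[of _ n n G n] Gc)
      also have "emb \<dots> = (f ^^ k) Q" using f_iter[OF v(1)] v(2) by simp
      finally show "p' y = 0" using van by (auto simp: orbit_def)
    qed
    then have van': "\<forall>y\<in>proj_pts N. p' y = 0"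
      using dense_use[OF P_dense orbitP_proj hp'] by blast
    show "\<forall>y\<in>proj_pts N. p y = 0"
    proof
      fix y assume y: "y \<in> proj_pts N"
      define w where "w = GI *\<^sub>v tov y"
      have wc: "w \<in> carrier_vec n" using GI by (simp add: w_def)
      have Gw: "G *\<^sub>v w = tov y"
      proof -
        have "G *\<^sub>v w = (G * GI) *\<^sub>v tov y"
          unfolding w_def using GI Gc by (intro assoc_mult_mat_vec[symmetric, of G n n GI n]) auto
        then show ?thesis using GI by simp
      qed
      have "w \<noteq> 0\<^sub>v n"
      proof
        assume "w = 0\<^sub>v n"
        then have "G *\<^sub>v w = 0\<^sub>v n" using Gc by (intro eq_vecI) (auto simp: scalar_prod_def)
        then show False using Gw tov_nz[OF y] by simp
      qed
      then have "p' (emb w) = 0" using van' emb_proj[OF wc] by blast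
      moreover have "p' (emb w) = p y"
        unfolding p'_def using matapp[OF Gc wc] Gw emb_tov[OF y] by simp
      ultimately show "p y = 0" by simp
    qed
  qed
qed

end

theorem lemma4p2:
  fixes N :: nat and A :: "nat \<Rightarrow> nat \<Rightarrow> complex"
  assumes "qbar_invertible N A"
    and "dense_orbit_pts N (mat_apply N A) \<noteq> {}"
  shows "\<exists>U. zariski_open N U \<and> U \<noteq> {} \<and> U \<subseteq> dense_orbit_pts N (mat_apply N A)"
proof -
  obtain P where P: "P \<in> dense_orbit_pts N (mat_apply N A)" using assms(2) by blast
  interpret dsetup N A P using assms(1) P by unfold_locales
  show ?thesis
  proof (intro exI conjI)
    show "zariski_open N U" by (rule U_open)
    show "U \<noteq> {}" using P_in_U by blast
    show "U \<subseteq> dense_orbit_pts N (mat_apply N A)"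
      using U_dense by (auto simp: dense_orbit_pts_def U_def)
  qed
qed

end
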